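(* Let $i\in\{1,2\}$. Define a sequence $(b^{(i)}_n)_{n\geq 0}$ of polynomials in $q$ by $b^{(i)}_0=1$, $b^{(i)}_1=q$ if $i=1$ and $b^{(i)}_1=0$ if $i=2$, and \[ b^{(i)}_{n+2}=q^{n+2}\,b^{(i)}_{n}-q^{n+1}\,b^{(i)}_{n+1}\qquad (n\geq 0). \] Then, as formal power series in $q$, \[ \sum_{n\geq 0}\frac{b^{(i)}_n}{(q;q)_n}=\frac{1}{(q^i,q^{5-i};q^5)_{\infty}}. \]
   Context: Standard $q$-Pochhammer notation: $(a;q)_n=\prod_{k=0}^{n-1}(1-aq^k)$, $(a;q)_\infty=\prod_{k\geq 0}(1-aq^k)$, and $(a_1,\dots,a_m;q)_\infty=\prod_{j=1}^m(a_j;q)_\infty$. *)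

theory Defs
  imports "HOL-Computational_Algebra.Formal_Power_Series"
begin

definition qpoch :: "'a::comm_ring_1 fps \<Rightarrow> 'a fps \<Rightarrow> nat \<Rightarrow> 'a fps" where
  "qpoch a q n = (\<Prod>k<n. 1 - a * q ^ k)"

text \<open>Infinite q-Pochhammer symbol (a;q)_oo as the limit (in the X-adic metric
  topology of formal power series) of the finite products.\<close>
definition qpoch_inf :: "'a::comm_ring_1 fps \<Rightarrow> 'a fps \<Rightarrow> 'a fps" where
  "qpoch_inf a q = lim (\<lambda>n. qpoch a q n)"

fun bseq :: "nat \<Rightarrow> nat \<Rightarrow> rat fps" where
  "bseq i 0 = 1"
| "bseq i (Suc 0) = (if i = 1 then fps_X else 0)"
| "bseq i (Suc (Suc n)) = fps_X ^ (n + 2) * bseq i n - fps_X ^ (n + 1) * bseq i (Suc n)"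

end

theory Submission
  imports Defs
begin

unbundle fps_syntax

definition eqto :: "nat \<Rightarrow> rat fps \<Rightarrow> rat fps \<Rightarrow> bool" where
  "eqto c f g \<longleftrightarrow> (\<forall>j\<le>c. f $ j = g $ j)"

lemma eqto_refl[simp]: "eqto c f f" by (simp add: eqto_def)
lemma eqto_sym: "eqto c f g \<Longrightarrow> eqto c g f" by (simp add: eqto_def)
lemma eqto_trans: "eqto c f g \<Longrightarrow> eqto c g h \<Longrightarrow> eqto c f h" by (simp add: eqto_def)
lemma eqto_mono: "eqto c f g \<Longrightarrow> c' \<le> c \<Longrightarrow> eqto c' f g" by (simp add: eqto_def)

lemma eqto_mult: "eqto c f f' \<Longrightarrow> eqto c g g' \<Longrightarrow> eqto c (f*g) (f'*g')"
  unfolding eqto_def fps_mult_nth by (auto intro!: sum.cong)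

lemma eqto_add: "eqto c f f' \<Longrightarrow> eqto c g g' \<Longrightarrow> eqto c (f+g) (f'+g')"
  unfolding eqto_def by auto

lemma eqto_diff: "eqto c f f' \<Longrightarrow> eqto c g g' \<Longrightarrow> eqto c (f-g) (f'-g')"
  unfolding eqto_def by auto

lemma eqto_inverse: assumes "eqto c f g" shows "eqto c (inverse f) (inverse g)"
proof (cases "f $ 0 = 0")
  case True
  then have "g $ 0 = 0" using assms by (auto simp: eqto_def)
  then have e2: "inverse g = 0" by simp
  have e1: "inverse f = 0" using True by simp
  show ?thesis unfolding e1 e2 by simp
next
  case False
  then have g0: "g $ 0 \<noteq> 0" using assms by (auto simp: eqto_def)
  have h: "fps_cutoff (Suc c) f = fps_cutoff (Suc c) g"
    using assms unfolding fps_cutoff_eq_fps_cutoff_iff eqto_def by (simp add: less_Suc_eq_le)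
  have "fps_cutoff (Suc c) (inverse f) = fps_cutoff (Suc c) (inverse (fps_cutoff (Suc c) f))"
    using fps_cutoff_inverse[OF False, of "Suc c"] by simp
  also have "\<dots> = fps_cutoff (Suc c) (inverse (fps_cutoff (Suc c) g))" by (simp only: h)
  also have "\<dots> = fps_cutoff (Suc c) (inverse g)"
    using fps_cutoff_inverse[OF g0, of "Suc c"] by simp
  finally have "\<forall>k<Suc c. inverse f $ k = inverse g $ k"
    unfolding fps_cutoff_eq_fps_cutoff_iff .
  then show ?thesis unfolding eqto_def by (simp add: less_Suc_eq_le)
qed

lemma eqto_all: "(\<And>c. eqto c f g) \<Longrightarrow> f = g"
  by (auto simp: eqto_def fps_eq_iff)

lemma eqto_sum: "(\<And>x. x \<in> A \<Longrightarrow> eqto c (f x) (g x)) \<Longrightarrow> eqto c (sum f A) (sum g A)"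
  unfolding eqto_def by (auto simp: fps_sum_nth intro!: sum.cong)

lemma eqto_prod: "(\<And>x. x \<in> A \<Longrightarrow> eqto c (f x) (g x)) \<Longrightarrow> eqto c (prod f A) (prod g A)"
  by (induction A rule: infinite_finite_induct) (auto intro: eqto_mult)

lemma qpoch_Suc: "qpoch a q (Suc n) = qpoch a q n * (1 - a * q ^ n)"
  by (simp add: qpoch_def)

lemma qpoch_Xpow: "qpoch ((fps_X::rat fps) ^ r) (fps_X ^ d) n = (\<Prod>k<n. 1 - fps_X ^ (r + d * k))"
  unfolding qpoch_def by (simp add: power_add power_mult)

lemma mult_one_minus_Xpow_nth:
  "j < e \<Longrightarrow> (F * (1 - fps_X ^ e)) $ j = (F::rat fps) $ j"
  by (simp add: algebra_simps fps_X_power_mult_right_nth)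

lemma qpoch_stable_Suc:
  assumes "r \<ge> 1" "d \<ge> 1" "j \<le> m"
  shows "qpoch ((fps_X::rat fps) ^ r) (fps_X ^ d) (Suc m) $ j = qpoch ((fps_X::rat fps) ^ r) (fps_X ^ d) m $ j"
proof -
  have "j < r + d * m" using assms
  proof -
    have "m \<le> d * m" using assms(2) by simp
    then show ?thesis using assms(1,3) by linarith
  qed
  then show ?thesis unfolding qpoch_Xpow by (simp add: mult_one_minus_Xpow_nth)
qed

lemma qpoch_stable:
  assumes "r \<ge> 1" "d \<ge> 1" "j \<le> m" "m \<le> m'"
  shows "qpoch ((fps_X::rat fps) ^ r) (fps_X ^ d) m' $ j = qpoch ((fps_X::rat fps) ^ r) (fps_X ^ d) m $ j"
  using assms(4)
proof (induction m' rule: dec_induct)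
  case (step n) then show ?case using qpoch_stable_Suc[OF assms(1,2), of j n] assms(3) by auto
qed simp

lemma qpoch_tendsto:
  assumes "r \<ge> 1" "d \<ge> 1"
  shows "(\<lambda>n. qpoch ((fps_X::rat fps) ^ r) (fps_X ^ d) n) \<longlonglongrightarrow> Abs_fps (\<lambda>j. qpoch ((fps_X::rat fps) ^ r) (fps_X ^ d) j $ j)"
  unfolding tendsto_fps_iff
  using qpoch_stable[OF assms] by (auto simp: eventually_sequentially)

lemma qpoch_inf_nth:
  assumes "r \<ge> 1" "d \<ge> 1" "j \<le> m"
  shows "qpoch_inf ((fps_X::rat fps) ^ r) (fps_X ^ d) $ j = qpoch ((fps_X::rat fps) ^ r) (fps_X ^ d) m $ j"
proof -
  have "qpoch_inf ((fps_X::rat fps) ^ r) (fps_X ^ d) = Abs_fps (\<lambda>j. qpoch ((fps_X::rat fps) ^ r) (fps_X ^ d) j $ j)"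
    unfolding qpoch_inf_def using qpoch_tendsto[OF assms(1,2)] by (rule limI)
  then show ?thesis using qpoch_stable[OF assms(1,2) order.refl assms(3)] by auto
qed

lemma qpoch_inf_eqto:
  assumes "r \<ge> 1" "d \<ge> 1" "c \<le> m"
  shows "eqto c (qpoch_inf ((fps_X::rat fps) ^ r) (fps_X ^ d)) (qpoch ((fps_X::rat fps) ^ r) (fps_X ^ d) m)"
  unfolding eqto_def
proof (intro allI impI)
  fix j assume "j \<le> c"
  then show "qpoch_inf ((fps_X::rat fps) ^ r) (fps_X ^ d) $ j = qpoch (fps_X ^ r) (fps_X ^ d) m $ j"
    using qpoch_inf_nth[OF assms(1,2), of j m] assms(3) by simp
qed

lemma qpoch_Xpow_0[simp]: "r \<ge> 1 \<Longrightarrow> qpoch ((fps_X::rat fps) ^ r) (fps_X ^ d) n $ 0 = 1"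
proof (induction n)
  case (Suc n) then show ?case unfolding qpoch_Suc by simp
qed (simp add: qpoch_def)

lemma qpoch_inf_0[simp]: "r \<ge> 1 \<Longrightarrow> d \<ge> 1 \<Longrightarrow> qpoch_inf ((fps_X::rat fps) ^ r) (fps_X ^ d) $ 0 = 1"
  using qpoch_inf_nth[of r d 0 0] by simp


unbundle fps_syntax

fun qbin :: "rat fps \<Rightarrow> nat \<Rightarrow> nat \<Rightarrow> rat fps" where
  "qbin p 0 k = (if k = 0 then 1 else 0)"
| "qbin p (Suc n) 0 = 1"
| "qbin p (Suc n) (Suc k) = qbin p n k + p ^ Suc k * qbin p n (Suc k)"

lemma qbin_gt: "n < k \<Longrightarrow> qbin p n k = 0"
proof (induction n arbitrary: k)
  case (Suc n) then show ?case by (cases k) auto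
qed simp

lemma qbin_0[simp]: "qbin p n 0 = 1" by (cases n) auto

lemma qbin_nn[simp]: "qbin p n n = 1"
  by (induction n) (auto simp: qbin_gt)

abbreviation u :: "rat fps \<Rightarrow> nat \<Rightarrow> rat fps" where "u p m \<equiv> qpoch p p m"

lemma u_Suc: "u p (Suc m) = u p m * (1 - p ^ Suc m)"
  by (simp add: qpoch_Suc)

lemma u_0[simp]: "u p 0 = 1" by (simp add: qpoch_def)

lemma u_nth0: "p $ 0 = 0 \<Longrightarrow> u p m $ 0 = 1"
  by (induction m) (auto simp: u_Suc)

lemma u_nz: "p $ 0 = 0 \<Longrightarrow> u p m \<noteq> 0"
  using u_nth0[of p m] by auto

lemma qbin_prod: "k \<le> n \<Longrightarrow> qbin p n k * (u p k * u p (n - k)) = u p n"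
proof (induction n arbitrary: k)
  case 0 then show ?case by simp
next
  case (Suc n)
  show ?case
  proof (cases k)
    case 0 then show ?thesis by simp
  next
    case (Suc k')
    then have k': "k' \<le> n" using Suc.prems by simp
    have A: "qbin p n k' * (u p (Suc k') * u p (n - k')) = u p n * (1 - p ^ Suc k')"
    proof -
      have "qbin p n k' * (u p (Suc k') * u p (n - k')) = (qbin p n k' * (u p k' * u p (n - k'))) * (1 - p ^ Suc k')"
        by (simp only: u_Suc ac_simps)
      then show ?thesis using Suc.IH[OF k'] by simp
    qed
    have B: "p ^ Suc k' * qbin p n (Suc k') * (u p (Suc k') * u p (n - k')) = u p n * (p ^ Suc k' - p ^ Suc n)"
    proof (cases "Suc k' \<le> n")
      case True
      then have e: "n - k' = Suc (n - Suc k')" by simp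
      have IH: "qbin p n (Suc k') * (u p (Suc k') * u p (n - Suc k')) = u p n" using Suc.IH[OF True] .
      have "p ^ Suc k' * qbin p n (Suc k') * (u p (Suc k') * u p (n - k')) =
            p ^ Suc k' * (qbin p n (Suc k') * (u p (Suc k') * u p (n - Suc k'))) * (1 - p ^ (n - k'))"
        unfolding e u_Suc by (simp only: ac_simps)
      also have "\<dots> = u p n * (p ^ Suc k' - p ^ Suc k' * p ^ (n - k'))"
        unfolding IH by (simp add: algebra_simps)
      also have "p ^ Suc k' * p ^ (n - k') = p ^ Suc n"
        using True by (simp flip: power_add)
      finally show ?thesis .
    next
      case False
      then have "k' = n" using k' by simp
      then show ?thesis by (simp add: qbin_gt)
    qed
    have "qbin p (Suc n) k * (u p k * u p (Suc n - k)) =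
          qbin p n k' * (u p (Suc k') * u p (n - k')) + p ^ Suc k' * qbin p n (Suc k') * (u p (Suc k') * u p (n - k'))"
      using Suc by (simp add: algebra_simps)
    also have "\<dots> = u p n * (1 - p ^ Suc k') + u p n * (p ^ Suc k' - p ^ Suc n)" using A B by simp
    also have "\<dots> = u p (Suc n)" by (simp add: u_Suc algebra_simps)
    finally show ?thesis .
  qed
qed

lemma qbin_P2:
  assumes p0: "p $ 0 = 0"
  shows "qbin p (Suc n) (Suc k) = qbin p n (Suc k) + p ^ (n - k) * qbin p n k"
proof (cases "Suc k \<le> n")
  case True
  define V where "V = u p (Suc k) * u p (n - k)"
  have V: "V \<noteq> 0" unfolding V_def using u_nz[OF p0] by simp
  have e: "n - k = Suc (n - Suc k)" using True by simp
  have L: "qbin p (Suc n) (Suc k) * V = u p (Suc n)"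
    unfolding V_def using qbin_prod[of "Suc k" "Suc n" p] True by simp
  have R1: "qbin p n (Suc k) * V = u p n * (1 - p ^ (n - k))"
  proof -
    have "qbin p n (Suc k) * V = (qbin p n (Suc k) * (u p (Suc k) * u p (n - Suc k))) * (1 - p ^ (n - k))"
      unfolding V_def e u_Suc by (simp only: ac_simps)
    then show ?thesis using qbin_prod[OF True, of p] by simp
  qed
  have R2: "p ^ (n - k) * qbin p n k * V = p ^ (n - k) * u p n * (1 - p ^ Suc k)"
  proof -
    have "p ^ (n - k) * qbin p n k * V = p ^ (n - k) * (qbin p n k * (u p k * u p (n - k))) * (1 - p ^ Suc k)"
      unfolding V_def u_Suc by (simp only: ac_simps)
    then show ?thesis using qbin_prod[of k n p] True by simp
  qed
  have pp: "p ^ (n - k) * p ^ Suc k = p ^ Suc n"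
  proof -
    have "n - k + Suc k = Suc n" using True by simp
    then show ?thesis by (metis power_add)
  qed
  have "(qbin p n (Suc k) + p ^ (n - k) * qbin p n k) * V = u p (Suc n)"
  proof -
    have "(qbin p n (Suc k) + p ^ (n - k) * qbin p n k) * V = u p n * (1 - p ^ (n - k)) + p ^ (n - k) * u p n * (1 - p ^ Suc k)"
      unfolding distrib_right R1 R2 ..
    also have "\<dots> = u p n * (1 - p ^ (n - k) * p ^ Suc k)" by (simp add: algebra_simps)
    also have "\<dots> = u p (Suc n)" unfolding pp u_Suc ..
    finally show ?thesis .
  qed
  then show ?thesis using L V by (metis mult_right_cancel)
next
  case False
  then show ?thesis
  proof (cases "k = n")
    case True then show ?thesis by (simp add: qbin_gt)
  next
    case False
    then have "n < k" using \<open>\<not> Suc k \<le> n\<close> by simp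
    then show ?thesis by (simp add: qbin_gt)
  qed
qed

definition qbz :: "rat fps \<Rightarrow> nat \<Rightarrow> int \<Rightarrow> rat fps" where
  "qbz p n k = (if k < 0 then 0 else qbin p n (nat k))"

lemma qbz_range: "qbz p n k \<noteq> 0 \<Longrightarrow> 0 \<le> k \<and> k \<le> int n"
proof -
  assume h: "qbz p n k \<noteq> 0"
  then have k0: "0 \<le> k" and q: "qbin p n (nat k) \<noteq> 0" unfolding qbz_def by (auto split: if_splits)
  then have "nat k \<le> n" using qbin_gt[of n "nat k" p] by linarith
  then show ?thesis using k0 by linarith
qed

lemma qbz_out: "k < 0 \<or> k > int n \<Longrightarrow> qbz p n k = 0"
  using qbz_range by force

lemma qbz_P1: "qbz p (Suc n) (k + 1) = qbz p n k + p ^ nat (k + 1) * qbz p n (k + 1)"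
proof (cases "k < -1")
  case True then show ?thesis by (simp add: qbz_def)
next
  case False
  then consider "k = -1" | "k \<ge> 0" by linarith
  then show ?thesis
  proof cases
    case 1 then show ?thesis by (simp add: qbz_def)
  next
    case 2
    then have "nat (k + 1) = Suc (nat k)" by simp
    then show ?thesis using 2 by (simp add: qbz_def)
  qed
qed

lemma qbz_P2:
  assumes "p $ 0 = 0"
  shows "qbz p (Suc n) (k + 1) = qbz p n (k + 1) + p ^ nat (int n - k) * qbz p n k"
proof (cases "k < -1")
  case True then show ?thesis by (simp add: qbz_def)
next
  case False
  then consider "k = -1" | "k \<ge> 0" by linarith
  then show ?thesis
  proof cases
    case 1 then show ?thesis by (simp add: qbz_def)
  next
    case 2
    then have "nat (k + 1) = Suc (nat k)" by simp
    moreover have "nat (int n - k) = n - nat k" using 2 by simp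
    ultimately show ?thesis using 2 qbin_P2[OF assms, of n "nat k"] by (simp add: qbz_def)
  qed
qed

lemma Xpow0: "d \<ge> 1 \<Longrightarrow> ((fps_X::rat fps) ^ d) $ 0 = 0" by simp

lemma qbin_eq_inv: "k \<le> n \<Longrightarrow> p $ 0 = 0 \<Longrightarrow> qbin p n k = u p n * inverse (u p k * u p (n - k))"
proof -
  assume kn: "k \<le> n" and p0: "p $ 0 = 0"
  have w: "(u p k * u p (n - k)) $ 0 \<noteq> 0" using u_nth0[OF p0] by simp
  have "qbin p n k = qbin p n k * (u p k * u p (n - k)) * inverse (u p k * u p (n - k))"
    using inverse_mult_eq_1'[OF w] by (simp add: mult.assoc)
  then show ?thesis using qbin_prod[OF kn] by simp
qed

lemma qbin_eqto_inf:
  assumes d: "d \<ge> 1" and "k \<le> n" "c \<le> k" "c \<le> n - k"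
  shows "eqto c (qbin ((fps_X::rat fps) ^ d) n k) (inverse (qpoch_inf (fps_X ^ d) (fps_X ^ d)))"
proof -
  let ?P = "qpoch_inf ((fps_X::rat fps) ^ d) (fps_X ^ d)"
  have p0: "((fps_X::rat fps) ^ d) $ 0 = 0" using d by simp
  have P0: "?P $ 0 = 1" using d by simp
  have e: "qbin (fps_X ^ d) n k = u (fps_X ^ d) n * inverse (u (fps_X ^ d) k * u (fps_X ^ d) (n - k))"
    using qbin_eq_inv[OF assms(2) p0] .
  have "eqto c (qbin (fps_X ^ d) n k) (?P * inverse (?P * ?P))"
    unfolding e using assms
    by (intro eqto_mult eqto_inverse eqto_sym[OF qpoch_inf_eqto]) auto
  also have "?P * inverse (?P * ?P) = inverse ?P"
    using inverse_mult_eq_1'[of ?P] P0 by (simp add: fps_inverse_mult)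
  finally show ?thesis .
qed

lemma qbin_eqto_inv:
  assumes d: "d \<ge> 1" and "k \<le> n" "c \<le> n - k"
  shows "eqto c (qbin ((fps_X::rat fps) ^ d) n k) (inverse (u (fps_X ^ d) k))"
proof -
  let ?u = "u ((fps_X::rat fps) ^ d)"
  have p0: "((fps_X::rat fps) ^ d) $ 0 = 0" using d by simp
  have e: "qbin (fps_X ^ d) n k = ?u n * inverse (?u k * ?u (n - k))"
    using qbin_eq_inv[OF assms(2) p0] .
  have st: "eqto c (?u n) (?u (n - k))"
    unfolding eqto_def using qpoch_stable[OF d d, of _ "n - k" n] assms by auto
  have "eqto c (qbin (fps_X ^ d) n k) (?u (n-k) * inverse (?u k * ?u (n - k)))"
    unfolding e by (intro eqto_mult st) simp
  also have "?u (n-k) * inverse (?u k * ?u (n - k)) = inverse (?u k)"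
    using inverse_mult_eq_1'[of "?u (n-k)"] u_nth0[OF p0] by (simp add: fps_inverse_mult algebra_simps)
  finally show ?thesis .
qed


unbundle fps_syntax

definition eps :: "int \<Rightarrow> rat fps" where "eps t = (if even t then 1 else -1)"
definition es :: "nat \<Rightarrow> int \<Rightarrow> nat" where "es s t = nat (t * (5*t + 1 + 2*int s) div 2)"
definition kk :: "nat \<Rightarrow> nat \<Rightarrow> int \<Rightarrow> int" where "kk s n t = (int n - int s - 5*t) div 2"
definition trm :: "nat \<Rightarrow> nat \<Rightarrow> int \<Rightarrow> rat fps" where
  "trm s n t = eps t * fps_X ^ es s t * qbz fps_X n (kk s n t)"

lemma eps_Suc: "eps (t + 1) = - eps t" by (simp add: eps_def)

lemma es_aux_nonneg: "s \<le> 1 \<Longrightarrow> 0 \<le> t * (5*t + 1 + 2*int s)"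
proof (cases "t \<ge> 0")
  case True assume "s \<le> 1" then show ?thesis using True by simp
next
  case False assume "s \<le> 1"
  then have "5*t + 1 + 2*int s < 0" using False by linarith
  then show ?thesis using False by (simp add: zero_le_mult_iff)
qed

lemma es_aux_even: "even (t * (5*t + 1 + 2*int s))"
proof -
  have "even (t * (5*t+1))" by (cases "even t") auto
  moreover have "t * (5*t + 1 + 2*int s) = t * (5*t+1) + 2 * (t * int s)" by (simp add: algebra_simps)
  ultimately show ?thesis by simp
qed

lemma es_int: "s \<le> 1 \<Longrightarrow> 2 * int (es s t) = t * (5*t + 1 + 2*int s)"
  unfolding es_def using es_aux_nonneg[of s t] es_aux_even[of t s] by simp

lemma es_ge: "s \<le> 1 \<Longrightarrow> nat \<bar>t\<bar> \<le> es s t"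
proof -
  assume s: "s \<le> 1"
  have "2 * \<bar>t\<bar> \<le> t * (5*t + 1 + 2*int s)"
  proof (cases "t \<ge> 0")
    case True
    show ?thesis
    proof (cases "t = 0")
      case False
      then have "2 \<le> 5*t + 1 + 2*int s" using True by linarith
      then have "t * 2 \<le> t * (5*t + 1 + 2*int s)" using True by (intro mult_left_mono) auto
      then show ?thesis using True by simp
    qed simp
  next
    case False
    have "2 * \<bar>t\<bar> = (-t) * 2" using False by simp
    also have "\<dots> \<le> (-t) * (-(5*t + 1 + 2*int s))" using False s by (intro mult_left_mono) auto
    finally show ?thesis by (simp add: algebra_simps)
  qed
  then show ?thesis using es_int[OF s, of t] by linarith
qed

lemma kk_SS: "kk s (Suc (Suc n)) t = kk s n t + 1" unfolding kk_def by simp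

lemma kk_S_even: "even (int n - int s - 5*t) \<Longrightarrow> kk s (Suc n) t = kk s n t"
  unfolding kk_def by presburger

lemma kk_S_odd: "odd (int n - int s - 5*t) \<Longrightarrow> kk s (Suc n) t = kk s n t + 1"
  unfolding kk_def by presburger

lemma kk_t1_odd: "odd (int n - int s - 5*t) \<Longrightarrow> kk s n (t + 1) = kk s n t - 2"
  unfolding kk_def by presburger

lemma kk_double_odd: "odd (int n - int s - 5*t) \<Longrightarrow> 2 * kk s n t = int n - int s - 5*t - 1"
  unfolding kk_def by presburger

definition gg :: "nat \<Rightarrow> nat \<Rightarrow> int \<Rightarrow> rat fps" where
  "gg s n t = (if even (int n - int s - 5*t)
     then eps t * fps_X ^ (es s t + nat (kk s n t + 1)) * qbz fps_X n (kk s n t + 1) else 0)"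

lemma X0: "(fps_X::rat fps) $ 0 = 0" by simp

lemma vanish_aux: "(fps_X ^ (nat (k+1) + nat (int n - k)) - fps_X ^ Suc n) * qbz (fps_X::rat fps) n k = 0"
proof (cases "qbz (fps_X::rat fps) n k = 0")
  case False
  then have "0 \<le> k" "k \<le> int n" using qbz_range by auto
  then have "nat (k+1) + nat (int n - k) = Suc n" by linarith
  then show ?thesis by simp
qed simp

lemma trm_rec:
  assumes s: "s \<le> 1"
  shows "trm s (Suc (Suc n)) t - trm s (Suc n) t - fps_X ^ Suc n * trm s n t = gg s n t - gg s n (t + 1)"
proof (cases "even (int n - int s - 5*t)")
  case True
  define k where "k = kk s n t"
  have g1: "gg s n (t+1) = 0" unfolding gg_def using True by auto
  have P: "qbz fps_X (Suc (Suc n)) (k + 1) = qbz fps_X (Suc n) k + fps_X ^ nat (k+1) * qbz fps_X (Suc n) (k+1)"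
    by (rule qbz_P1)
  have Q: "qbz fps_X (Suc n) (k+1) = qbz fps_X n (k+1) + fps_X ^ nat (int n - k) * qbz fps_X n k"
    by (rule qbz_P2[OF X0])
  have br: "qbz fps_X (Suc (Suc n)) (k + 1) - qbz fps_X (Suc n) k - fps_X ^ Suc n * qbz fps_X n k
      = fps_X ^ nat (k+1) * qbz fps_X n (k+1)"
  proof -
    have "qbz fps_X (Suc (Suc n)) (k + 1) - qbz fps_X (Suc n) k - fps_X ^ Suc n * qbz fps_X n k
       = fps_X ^ nat (k+1) * qbz fps_X n (k+1) + (fps_X ^ (nat (k+1) + nat (int n - k)) - fps_X ^ Suc n) * qbz (fps_X::rat fps) n k"
      unfolding P Q by (simp add: algebra_simps power_add)
    then show ?thesis using vanish_aux[of k n] by simp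
  qed
  have "trm s (Suc (Suc n)) t - trm s (Suc n) t - fps_X ^ Suc n * trm s n t
      = eps t * fps_X ^ es s t * (qbz fps_X (Suc (Suc n)) (k + 1) - qbz fps_X (Suc n) k - fps_X ^ Suc n * qbz fps_X n k)"
    unfolding trm_def kk_SS kk_S_even[OF True] k_def by (simp add: algebra_simps)
  also have "\<dots> = gg s n t" unfolding br gg_def using True by (simp add: k_def power_add)
  finally show ?thesis using g1 by simp
next
  case False
  note oddc = False
  define k where "k = kk s n t"
  have g0: "gg s n t = 0" unfolding gg_def using False by auto
  have ev1: "even (int n - int s - 5*(t+1))" using False by presburger
  have kt1: "kk s n (t + 1) + 1 = k - 1" unfolding k_def using kk_t1_odd[OF False] by simp
  have g1: "gg s n (t+1) = - eps t * fps_X ^ (es s (t+1) + nat (k - 1)) * qbz fps_X n (k - 1)"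
    unfolding gg_def kt1 using ev1 by (simp add: eps_Suc)
  have P: "qbz fps_X (Suc (Suc n)) (k + 1) = qbz fps_X (Suc n) (k+1) + fps_X ^ nat (int (Suc n) - k) * qbz fps_X (Suc n) k"
    by (rule qbz_P2[OF X0])
  have Q: "qbz fps_X (Suc n) k = qbz fps_X n (k - 1) + fps_X ^ nat k * qbz fps_X n k"
    using qbz_P1[of fps_X n "k - 1"] by simp
  have br: "qbz fps_X (Suc (Suc n)) (k + 1) - qbz fps_X (Suc n) (k+1) - fps_X ^ Suc n * qbz fps_X n k
      = fps_X ^ nat (int n + 1 - k) * qbz fps_X n (k - 1)"
  proof -
    have e: "nat (int (Suc n) - k) = nat (int n + 1 - k)" by simp
    have "(fps_X ^ (nat (int n + 1 - k) + nat k) - fps_X ^ Suc n) * qbz (fps_X::rat fps) n k = 0"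
    proof (cases "qbz (fps_X::rat fps) n k = 0")
      case False
      then have "0 \<le> k" "k \<le> int n" using qbz_range by auto
      then have "nat (int n + 1 - k) + nat k = Suc n" by linarith
      then show ?thesis by simp
    qed simp
    moreover have "qbz fps_X (Suc (Suc n)) (k + 1) - qbz fps_X (Suc n) (k+1) - fps_X ^ Suc n * qbz fps_X n k
       = fps_X ^ nat (int n + 1 - k) * qbz fps_X n (k - 1) + (fps_X ^ (nat (int n + 1 - k) + nat k) - fps_X ^ Suc n) * qbz (fps_X::rat fps) n k"
      unfolding P Q e by (simp add: algebra_simps power_add)
    ultimately show ?thesis by simp
  qed
  have ex: "fps_X ^ (es s t + nat (int n + 1 - k)) * qbz fps_X n (k - 1) = fps_X ^ (es s (t+1) + nat (k - 1)) * qbz (fps_X::rat fps) n (k - 1)"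
  proof (cases "qbz (fps_X::rat fps) n (k - 1) = 0")
    case False
    then have r: "0 \<le> k - 1" "k - 1 \<le> int n" using qbz_range[OF False] by auto
    have "2 * k = int n - int s - 5*t - 1" unfolding k_def by (rule kk_double_odd[OF oddc])
    moreover have "2 * int (es s t) = t * (5*t + 1 + 2*int s)" by (rule es_int[OF s])
    moreover have "2 * int (es s (t+1)) = (t+1) * (5*(t+1) + 1 + 2*int s)" by (rule es_int[OF s])
    ultimately have "int (es s t + nat (int n + 1 - k)) = int (es s (t+1) + nat (k - 1))"
      using r by (simp add: algebra_simps)
    then show ?thesis by (simp only: of_nat_eq_iff)
  qed simp
  have "trm s (Suc (Suc n)) t - trm s (Suc n) t - fps_X ^ Suc n * trm s n t
      = eps t * fps_X ^ es s t * (qbz fps_X (Suc (Suc n)) (k + 1) - qbz fps_X (Suc n) (k+1) - fps_X ^ Suc n * qbz fps_X n k)"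
    unfolding trm_def kk_SS kk_S_odd[OF False] k_def by (simp add: algebra_simps)
  also have "\<dots> = eps t * (fps_X ^ (es s t + nat (int n + 1 - k)) * qbz fps_X n (k - 1))"
    unfolding br by (simp add: power_add algebra_simps)
  also have "\<dots> = - gg s n (t+1)" unfolding ex g1 by simp
  finally show ?thesis using g0 by simp
qed


unbundle fps_syntax

lemma tele_aux: "(\<Sum>t\<in>{a..a + int m - 1}. f t - f (t+1)) = f a - f (a + int m)"
  for f :: "int \<Rightarrow> 'a::ab_group_add"
proof (induction m)
  case 0 then show ?case by simp
next
  case (Suc m)
  have "{a..a + int (Suc m) - 1} = insert (a + int m) {a..a + int m - 1}" by auto
  moreover have "a + int m \<notin> {a..a + int m - 1}" by simp
  ultimately show ?case using Suc by (simp add: algebra_simps)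
qed

lemma tele_int: "a \<le> b + 1 \<Longrightarrow> (\<Sum>t\<in>{a..b}. f t - f (t+1)) = f a - f (b+1)"
  for f :: "int \<Rightarrow> 'a::ab_group_add"
  using tele_aux[of f a "nat (b + 1 - a)"] by simp

definition D :: "nat \<Rightarrow> nat \<Rightarrow> rat fps" where
  "D s n = (\<Sum>t\<in>{-int n..int n}. trm s n t)"

lemma trm_out: "s \<le> 1 \<Longrightarrow> \<bar>t\<bar> > int n \<Longrightarrow> trm s n t = 0"
proof -
  assume s: "s \<le> 1" and t: "\<bar>t\<bar> > int n"
  have "kk s n t < 0 \<or> kk s n t > int n" unfolding kk_def using s t by (cases "t \<ge> 0") auto
  then show ?thesis unfolding trm_def using qbz_out by auto
qed

lemma D_win: "s \<le> 1 \<Longrightarrow> n \<le> M \<Longrightarrow> (\<Sum>t\<in>{-int M..int M}. trm s n t) = D s n"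
  unfolding D_def by (rule sum.mono_neutral_right) (auto intro!: trm_out)

lemma gg_out: "s \<le> 1 \<Longrightarrow> (t \<ge> int n + 3 \<or> t \<le> - int n - 2) \<Longrightarrow> gg s n t = 0"
proof -
  assume s: "s \<le> 1" and t: "t \<ge> int n + 3 \<or> t \<le> - int n - 2"
  have "kk s n t + 1 < 0 \<or> kk s n t + 1 > int n" unfolding kk_def using s t by auto
  then show ?thesis unfolding gg_def using qbz_out by auto
qed

lemma D_rec: "s \<le> 1 \<Longrightarrow> D s (Suc (Suc n)) = D s (Suc n) + fps_X ^ Suc n * D s n"
proof -
  assume s: "s \<le> 1"
  let ?M = "Suc (Suc n)"
  let ?W = "{-int ?M..int ?M}"
  have "(\<Sum>t\<in>?W. trm s (Suc (Suc n)) t - trm s (Suc n) t - fps_X ^ Suc n * trm s n t) =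
        (\<Sum>t\<in>?W. trm s (Suc (Suc n)) t) - (\<Sum>t\<in>?W. trm s (Suc n) t) - fps_X ^ Suc n * (\<Sum>t\<in>?W. trm s n t)"
    by (simp add: sum_subtractf sum_distrib_left)
  also have "\<dots> = D s (Suc (Suc n)) - D s (Suc n) - fps_X ^ Suc n * D s n"
    using D_win[OF s, of "Suc n" ?M] D_win[OF s, of n ?M] D_win[OF s, of ?M ?M] by simp
  finally have "D s (Suc (Suc n)) - D s (Suc n) - fps_X ^ Suc n * D s n =
        (\<Sum>t\<in>?W. trm s (Suc (Suc n)) t - trm s (Suc n) t - fps_X ^ Suc n * trm s n t)" by simp
  also have "\<dots> = (\<Sum>t\<in>{-int ?M..int ?M}. gg s n t - gg s n (t+1))"
    using trm_rec[OF s] by simp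
  also have "\<dots> = gg s n (- int ?M) - gg s n (int ?M + 1)" by (rule tele_int) simp
  also have "\<dots> = 0" using gg_out[OF s] by simp
  finally show ?thesis by (simp add: algebra_simps)
qed

lemma int_m1_1: "{-1..1::int} = {-1,0,1}" by auto
lemma int_m2_2: "{-2..2::int} = {-2,-1,0,1,2}" by auto

lemma qbin_1_0: "qbin p 1 0 = 1" by simp
lemma qbin_2_1: "qbin p 2 1 = 1 + p" by (simp add: numeral_2_eq_2)

lemma D_1: "s \<le> 1 \<Longrightarrow> D s 1 = 1"
  unfolding D_def trm_def by (auto simp: int_m1_1 kk_def qbz_def es_def eps_def qbin_gt)

lemma D_2_0: "D 0 2 = 1 + fps_X"
  unfolding D_def trm_def by (auto simp: int_m2_2 kk_def qbz_def es_def eps_def qbin_gt numeral_2_eq_2)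

lemma D_2_1: "D 1 2 = 1"
  unfolding D_def trm_def by (auto simp: int_m2_2 kk_def qbz_def es_def eps_def qbin_gt)


unbundle fps_syntax
declare qbin.simps(3)[simp del] bseq.simps(3)[simp del]

definition Lsum :: "nat \<Rightarrow> nat \<Rightarrow> rat fps" where
  "Lsum i N = (\<Sum>n\<le>N. bseq i n * qbin fps_X N n)"
definition Msum :: "nat \<Rightarrow> nat \<Rightarrow> rat fps" where
  "Msum i N = (\<Sum>n\<le>N. fps_X ^ (N - n) * bseq i (Suc n) * qbin fps_X N n)"

lemma sum_shift_last: "(\<Sum>n\<le>N. f (Suc n)) = (\<Sum>n\<le>N. f n) - f 0 + f (Suc N)"
  for f :: "nat \<Rightarrow> 'a::ab_group_add"
  using sum.atMost_Suc_shift[of f N] sum.atMost_Suc[of f N] by (simp add: algebra_simps)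

lemma L_step1: "Lsum i (Suc N) = Lsum i N + Msum i N"
proof -
  have "Lsum i (Suc N) = bseq i 0 + (\<Sum>n\<le>N. bseq i (Suc n) * qbin fps_X (Suc N) (Suc n))"
    unfolding Lsum_def sum.atMost_Suc_shift by simp
  also have "\<dots> = bseq i 0 + (\<Sum>n\<le>N. bseq i (Suc n) * qbin fps_X N (Suc n)) + Msum i N"
    unfolding Msum_def qbin_P2[OF X0] by (simp add: distrib_left sum.distrib ac_simps)
  also have "bseq i 0 + (\<Sum>n\<le>N. bseq i (Suc n) * qbin fps_X N (Suc n)) = Lsum i N"
    unfolding Lsum_def using sum_shift_last[of "\<lambda>n. bseq i n * qbin fps_X N n" N] by (simp add: qbin_gt)
  finally show ?thesis .
qed

lemma L_step2: "Msum i (Suc N) = fps_X ^ Suc (Suc N) * Lsum i N"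
proof -
  have "Msum i (Suc N) = fps_X ^ Suc N * bseq i 1 +
      (\<Sum>n\<le>N. fps_X ^ (N - n) * bseq i (Suc (Suc n)) * qbin fps_X (Suc N) (Suc n))"
    unfolding Msum_def sum.atMost_Suc_shift by simp
  also have "(\<Sum>n\<le>N. fps_X ^ (N - n) * bseq i (Suc (Suc n)) * qbin fps_X (Suc N) (Suc n)) =
      (\<Sum>n\<le>N. fps_X ^ (N - n) * bseq i (Suc (Suc n)) * qbin fps_X N n) +
      (\<Sum>n\<le>N. fps_X ^ Suc N * (bseq i (Suc (Suc n)) * qbin fps_X N (Suc n)))"
  proof -
    have "\<And>n. n \<le> N \<Longrightarrow> fps_X ^ (N - n) * bseq i (Suc (Suc n)) * qbin fps_X (Suc N) (Suc n) =
       fps_X ^ (N - n) * bseq i (Suc (Suc n)) * qbin fps_X N n + fps_X ^ Suc N * (bseq i (Suc (Suc n)) * qbin fps_X N (Suc n))"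
    proof -
      fix n assume "n \<le> N"
      then have "fps_X ^ (N - n) * (fps_X::rat fps) ^ Suc n = fps_X ^ Suc N" by (simp flip: power_add)
      then show "fps_X ^ (N - n) * bseq i (Suc (Suc n)) * qbin fps_X (Suc N) (Suc n) =
       fps_X ^ (N - n) * bseq i (Suc (Suc n)) * qbin fps_X N n + fps_X ^ Suc N * (bseq i (Suc (Suc n)) * qbin fps_X N (Suc n))"
        unfolding qbin.simps(3) by (simp add: distrib_left)
    qed
    then show ?thesis by (simp add: sum.distrib)
  qed
  also have "(\<Sum>n\<le>N. fps_X ^ Suc N * (bseq i (Suc (Suc n)) * qbin fps_X N (Suc n))) =
      fps_X ^ Suc N * ((\<Sum>n\<le>N. bseq i (Suc n) * qbin fps_X N n) - bseq i 1)"
    using sum_shift_last[of "\<lambda>n. bseq i (Suc n) * qbin fps_X N n" N]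
    by (simp add: sum_distrib_left[symmetric] qbin_gt)
  also have "(\<Sum>n\<le>N. fps_X ^ (N - n) * bseq i (Suc (Suc n)) * qbin fps_X N n) =
      fps_X ^ Suc (Suc N) * Lsum i N - fps_X ^ Suc N * (\<Sum>n\<le>N. bseq i (Suc n) * qbin fps_X N n)"
  proof -
    have "\<And>n. n \<le> N \<Longrightarrow> fps_X ^ (N - n) * bseq i (Suc (Suc n)) * qbin fps_X N n =
        fps_X ^ Suc (Suc N) * (bseq i n * qbin fps_X N n) - fps_X ^ Suc N * (bseq i (Suc n) * qbin fps_X N n)"
    proof -
      fix n assume "n \<le> N"
      then have a: "fps_X ^ (N - n) * (fps_X::rat fps) ^ Suc (Suc n) = fps_X ^ Suc (Suc N)"
        and b: "fps_X ^ (N - n) * (fps_X::rat fps) ^ Suc n = fps_X ^ Suc N" by (simp_all flip: power_add)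
      have "fps_X ^ (N - n) * bseq i (Suc (Suc n)) = (fps_X ^ (N - n) * fps_X ^ Suc (Suc n)) * bseq i n - (fps_X ^ (N - n) * fps_X ^ Suc n) * bseq i (Suc n)"
        unfolding bseq.simps(3) by (simp add: algebra_simps)
      then have h': "fps_X ^ (N - n) * bseq i (Suc (Suc n)) = fps_X ^ Suc (Suc N) * bseq i n - fps_X ^ Suc N * bseq i (Suc n)"
        unfolding a b .
      show "fps_X ^ (N - n) * bseq i (Suc (Suc n)) * qbin fps_X N n =
        fps_X ^ Suc (Suc N) * (bseq i n * qbin fps_X N n) - fps_X ^ Suc N * (bseq i (Suc n) * qbin fps_X N n)"
        by (metis h' left_diff_distrib mult.assoc)
    qed
    then show ?thesis unfolding Lsum_def by (simp add: sum_subtractf sum_distrib_left)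
  qed
  finally show ?thesis by (simp add: algebra_simps)
qed

lemma L_rec: "Lsum i (Suc (Suc N)) = Lsum i (Suc N) + fps_X ^ Suc (Suc N) * Lsum i N"
  using L_step1[of i "Suc N"] L_step2[of i N] by simp

lemma L_0: "Lsum i 0 = 1" unfolding Lsum_def by simp
lemma L_1: "Lsum i 1 = 1 + bseq i 1" unfolding Lsum_def by simp

lemma L_eq_D:
  assumes i: "i \<in> {1, 2}"
  shows "Lsum i N = D (i - 1) (Suc N)"
proof (induction N rule: nat_less_induct)
  case (1 N)
  have s: "i - 1 \<le> 1" using i by auto
  show ?case
  proof (cases N)
    case 0 then show ?thesis using D_1[OF s] L_0 by simp
  next
    case (Suc N')
    show ?thesis
    proof (cases N')
      case 0
      then show ?thesis using Suc i L_1 D_2_0 D_2_1 by (auto simp: numeral_2_eq_2)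
    next
      case (Suc N'')
      then show ?thesis using \<open>N = Suc N'\<close> 1 L_rec[of i N''] D_rec[OF s, of "Suc N''"] by simp
    qed
  qed
qed


unbundle fps_syntax

definition epsr :: "int \<Rightarrow> rat" where "epsr t = (if even t then 1 else -1)"

lemma eps_const: "eps t = fps_const (epsr t)"
  unfolding eps_def epsr_def by (cases "even t") (simp_all only: if_True if_False fps_const_neg [symmetric] fps_const_1_eq_1)

definition Theta :: "nat \<Rightarrow> rat fps" where
  "Theta s = Abs_fps (\<lambda>c. \<Sum>t\<in>{-int c..int c}. if es s t = c then epsr t else 0)"

lemma Theta_nth_win:
  assumes s: "s \<le> 1" and "d \<le> c"
  shows "Theta s $ d = (\<Sum>t\<in>{-int c..int c}. if es s t = d then epsr t else 0)"
  unfolding Theta_def fps_nth_Abs_fps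
proof (rule sum.mono_neutral_left)
  show "\<forall>t\<in>{- int c..int c} - {- int d..int d}. (if es s t = d then epsr t else 0) = 0"
  proof
    fix t assume "t \<in> {- int c..int c} - {- int d..int d}"
    then have "\<bar>t\<bar> > int d" by auto
    then have "es s t > d" using es_ge[OF s, of t] by linarith
    then show "(if es s t = d then epsr t else 0) = 0" by simp
  qed
qed (use assms in auto)

lemma term_nth: "(eps t * fps_X ^ e * f) $ c = (if c < e then 0 else epsr t * f $ (c - e))"
  unfolding eps_const by (simp add: mult.assoc fps_X_power_mult_nth)

lemma GL:
  assumes s: "s \<le> 1" and w: "\<And>n. n \<le> w n"
    and f: "\<And>c t. eventually (\<lambda>n. eqto c (f n t) G) sequentially"
  shows "(\<lambda>n. \<Sum>t\<in>{-int (w n)..int (w n)}. eps t * fps_X ^ es s t * f n t) \<longlonglongrightarrow> G * Theta s"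
  unfolding tendsto_fps_iff
proof
  fix c
  let ?W = "{-int c..int c}"
  have ev1: "eventually (\<lambda>n. \<forall>t\<in>?W. eqto c (f n t) G) sequentially"
    by (rule eventually_ball_finite) (use f in auto)
  have ev2: "eventually (\<lambda>n. c \<le> n) sequentially" by (rule eventually_ge_at_top)
  have RHS: "(G * Theta s) $ c = (\<Sum>t\<in>?W. if es s t \<le> c then epsr t * G $ (c - es s t) else 0)"
  proof -
    have "(G * Theta s) $ c = (\<Sum>d=0..c. G $ d * Theta s $ (c - d))" by (rule fps_mult_nth)
    also have "\<dots> = (\<Sum>d=0..c. \<Sum>t\<in>?W. if es s t = c - d then G $ d * epsr t else 0)"
    proof (intro sum.cong refl)
      fix d assume "d \<in> {0..c}"
      then show "G $ d * Theta s $ (c - d) = (\<Sum>t\<in>?W. if es s t = c - d then G $ d * epsr t else 0)"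
        using Theta_nth_win[OF s, of "c - d" c] by (auto simp: sum_distrib_left intro!: sum.cong)
    qed
    also have "\<dots> = (\<Sum>t\<in>?W. \<Sum>d=0..c. if es s t = c - d then G $ d * epsr t else 0)"
      by (rule sum.swap)
    also have "\<dots> = (\<Sum>t\<in>?W. if es s t \<le> c then epsr t * G $ (c - es s t) else 0)"
    proof (intro sum.cong refl)
      fix t
      have "(\<Sum>d=0..c. if es s t = c - d then G $ d * epsr t else 0) =
            (\<Sum>d=0..c. if d = c - es s t \<and> es s t \<le> c then G $ d * epsr t else 0)"
        by (intro sum.cong refl) auto
      also have "\<dots> = (if es s t \<le> c then epsr t * G $ (c - es s t) else 0)"
        by (cases "es s t \<le> c") (simp_all add: sum.delta' mult.commute)
      finally show "(\<Sum>d=0..c. if es s t = c - d then G $ d * epsr t else 0) =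
            (if es s t \<le> c then epsr t * G $ (c - es s t) else 0)" .
    qed
    finally show ?thesis .
  qed
  show "eventually (\<lambda>n. (\<Sum>t\<in>{-int (w n)..int (w n)}. eps t * fps_X ^ es s t * f n t) $ c = (G * Theta s) $ c) sequentially"
    using ev1 ev2
  proof eventually_elim
    case (elim n)
    have "(\<Sum>t\<in>{-int (w n)..int (w n)}. eps t * fps_X ^ es s t * f n t) $ c =
          (\<Sum>t\<in>{-int (w n)..int (w n)}. if c < es s t then 0 else epsr t * f n t $ (c - es s t))"
      by (simp add: fps_sum_nth term_nth)
    also have "\<dots> = (\<Sum>t\<in>?W. if c < es s t then 0 else epsr t * f n t $ (c - es s t))"
    proof (rule sum.mono_neutral_right)
      show "?W \<subseteq> {-int (w n)..int (w n)}" using elim w[of n] by auto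
      show "\<forall>t\<in>{-int (w n)..int (w n)} - ?W. (if c < es s t then 0 else epsr t * f n t $ (c - es s t)) = 0"
      proof
        fix t assume "t \<in> {-int (w n)..int (w n)} - ?W"
        then have "\<bar>t\<bar> > int c" by auto
        then have "es s t > c" using es_ge[OF s, of t] by linarith
        then show "(if c < es s t then 0 else epsr t * f n t $ (c - es s t)) = 0" by simp
      qed
    qed simp
    also have "\<dots> = (\<Sum>t\<in>?W. if es s t \<le> c then epsr t * G $ (c - es s t) else 0)"
    proof (intro sum.cong refl)
      fix t assume "t \<in> ?W"
      then have "eqto c (f n t) G" using elim by auto
      then show "(if c < es s t then 0 else epsr t * f n t $ (c - es s t)) =
                 (if es s t \<le> c then epsr t * G $ (c - es s t) else 0)"
        unfolding eqto_def by auto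
    qed
    finally show ?case using RHS by simp
  qed
qed


unbundle fps_syntax
declare qbin.simps(3)[simp del]

definition tri :: "nat \<Rightarrow> nat" where "tri j = (\<Sum>i<j. i)"

lemma tri_Suc: "tri (Suc j) = tri j + j" unfolding tri_def by simp
lemma tri_0[simp]: "tri 0 = 0" unfolding tri_def by simp
lemma tri_eq: "2 * tri j + j = j * j"
  by (induction j) (auto simp: tri_Suc algebra_simps)

lemma prod_split: "(\<Prod>j<n + m. f j) = (\<Prod>j<n. f j) * (\<Prod>k<m. f (n + k))" for n m :: nat
  by (induction m) (auto simp: ac_simps)

lemma qbinthm:
  assumes p0: "p $ 0 = 0"
  shows "(\<Prod>j<m. z + y * p ^ j) = (\<Sum>j\<le>m. p ^ tri j * qbin p m j * y ^ j * z ^ (m - j))"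
proof (induction m)
  case 0 then show ?case by (simp add: tri_def)
next
  case (Suc m)
  define F where "F j = p ^ tri j * qbin p m j * y ^ j * z ^ (Suc m - j)" for j
  have A: "z * (\<Sum>j\<le>m. p ^ tri j * qbin p m j * y ^ j * z ^ (m - j)) = (\<Sum>j\<le>m. F j)"
    unfolding sum_distrib_left F_def
    by (intro sum.cong refl) (simp add: Suc_diff_le algebra_simps)
  have B: "y * p ^ m * (\<Sum>j\<le>m. p ^ tri j * qbin p m j * y ^ j * z ^ (m - j)) =
           (\<Sum>k\<le>m. p ^ tri (Suc k) * (p ^ (m - k) * qbin p m k) * y ^ Suc k * z ^ (m - k))"
    unfolding sum_distrib_left
  proof (intro sum.cong refl)
    fix k assume "k \<in> {..m}"
    then have "tri (Suc k) + (m - k) = tri k + m" by (simp add: tri_Suc)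
    then have "p ^ tri (Suc k) * p ^ (m - k) = p ^ tri k * p ^ m" by (metis power_add)
    then show "y * p ^ m * (p ^ tri k * qbin p m k * y ^ k * z ^ (m - k)) =
          p ^ tri (Suc k) * (p ^ (m - k) * qbin p m k) * y ^ Suc k * z ^ (m - k)"
      by (simp add: algebra_simps)
  qed
  have C: "(\<Sum>k\<le>m. p ^ tri (Suc k) * qbin p m (Suc k) * y ^ Suc k * z ^ (m - k)) = (\<Sum>j\<le>m. F j) - F 0"
  proof -
    have "(\<Sum>k\<le>m. p ^ tri (Suc k) * qbin p m (Suc k) * y ^ Suc k * z ^ (m - k)) = (\<Sum>k\<le>m. F (Suc k))"
      unfolding F_def by simp
    also have "\<dots> = (\<Sum>j\<le>m. F j) - F 0 + F (Suc m)"
      using sum.atMost_Suc_shift[of F m] sum.atMost_Suc[of F m] by (simp add: algebra_simps)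
    also have "F (Suc m) = 0" unfolding F_def by (simp add: qbin_gt)
    finally show ?thesis by simp
  qed
  have "(\<Sum>j\<le>Suc m. p ^ tri j * qbin p (Suc m) j * y ^ j * z ^ (Suc m - j)) =
        z ^ Suc m + (\<Sum>k\<le>m. p ^ tri (Suc k) * qbin p (Suc m) (Suc k) * y ^ Suc k * z ^ (m - k))"
    unfolding sum.atMost_Suc_shift by (simp add: tri_def)
  also have "\<dots> = z ^ Suc m + (\<Sum>k\<le>m. p ^ tri (Suc k) * qbin p m (Suc k) * y ^ Suc k * z ^ (m - k))
                 + (\<Sum>k\<le>m. p ^ tri (Suc k) * (p ^ (m - k) * qbin p m k) * y ^ Suc k * z ^ (m - k))"
    unfolding qbin_P2[OF p0] by (simp add: algebra_simps sum.distrib)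
  also have "\<dots> = (\<Sum>j\<le>m. F j) + y * p ^ m * (\<Sum>j\<le>m. p ^ tri j * qbin p m j * y ^ j * z ^ (m - j))"
    unfolding C B by (simp add: F_def tri_def)
  also have "\<dots> = (z + y * p ^ m) * (\<Sum>j\<le>m. p ^ tri j * qbin p m j * y ^ j * z ^ (m - j))"
    unfolding A[symmetric] by (simp add: algebra_simps)
  finally show ?case using Suc.IH by (simp add: ac_simps)
qed


unbundle fps_syntax
declare qbin.simps(3)[simp del]

lemma cancel2: "2 * (a::int) = 2 * b \<Longrightarrow> a = b" by simp

lemma expo_id:
  assumes s: "s \<le> 1" and n: "1 \<le> n" and j: "j \<le> 2*n"
  shows "5 * tri j + (5*n - (s+3)) * (2*n - j) = n * (5*n - (s+3)) + 5 * tri n + es s (int j - int n)"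
proof -
  have "int (2 * tri j + j) = int (j * j)" using tri_eq[of j] by simp
  then have t1: "2 * int (tri j) = int j * int j - int j" by simp
  have "int (2 * tri n + n) = int (n * n)" using tri_eq[of n] by simp
  then have t2: "2 * int (tri n) = int n * int n - int n" by simp
  have e: "2 * int (es s (int j - int n)) = (int j - int n) * (5*(int j - int n) + 1 + 2*int s)"
    by (rule es_int[OF s])
  have a: "int (5*n - (s+3)) = 5 * int n - int s - 3" using s n by linarith
  have b: "int (2*n - j) = 2 * int n - int j" using j by linarith
  have "2 * int (5 * tri j + (5*n - (s+3)) * (2*n - j)) = 2 * int (n * (5*n - (s+3)) + 5 * tri n + es s (int j - int n))"
    unfolding of_nat_add of_nat_mult a b
    using t1 t2 e by (simp add: algebra_simps)
  then have "int (5 * tri j + (5*n - (s+3)) * (2*n - j)) = int (n * (5*n - (s+3)) + 5 * tri n + es s (int j - int n))"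
    by (rule cancel2)
  then show ?thesis by (simp only: of_nat_eq_iff)
qed

lemma neg1_pow: "(-1::rat fps) ^ j = (-1) ^ n * eps (int j - int n)"
  unfolding eps_def by (auto simp: minus_one_power_iff)

lemma jtp_finite:
  assumes s: "s \<le> 1"
  shows "qpoch ((fps_X::rat fps) ^ (s+3)) (fps_X ^ 5) n * qpoch (fps_X ^ (2-s)) (fps_X ^ 5) n =
         (\<Sum>t\<in>{-int n..int n}. eps t * fps_X ^ es s t * qbz (fps_X ^ 5) (2*n) (int n + t))"
proof (cases "n = 0")
  case True
  then show ?thesis by (simp add: qpoch_def eps_def es_def qbz_def)
next
  case False
  then have n1: "1 \<le> n" by simp
  let ?a = "s + 3"
  let ?p = "(fps_X::rat fps) ^ 5"
  let ?z = "(fps_X::rat fps) ^ (5*n - ?a)"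
  define M where "M = (5*n - ?a) * n + 5 * tri n"
  let ?PA = "qpoch ((fps_X::rat fps) ^ (s+3)) (fps_X ^ 5) n"
  let ?PB = "qpoch ((fps_X::rat fps) ^ (2-s)) (fps_X ^ 5) n"
  let ?f = "\<lambda>j. ?z + (-1) * ?p ^ j"
  have p0: "?p $ 0 = 0" by simp
  have H1: "(\<Prod>j<2*n. ?f j) = (\<Sum>j\<le>2*n. ?p ^ tri j * qbin ?p (2*n) j * (-1) ^ j * ?z ^ (2*n - j))"
    by (rule qbinthm[OF p0])
  have H2a: "(\<Prod>k<n. ?f (n + k)) = fps_X ^ ((5*n - ?a) * n) * ?PA"
  proof -
    have "(\<Prod>k<n. ?f (n + k)) = (\<Prod>k<n. fps_X ^ (5*n - ?a) * (1 - fps_X ^ (s + 3 + 5 * k)))"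
    proof (intro prod.cong refl)
      fix k assume "k \<in> {..<n}"
      have "5*n - ?a + (s + 3 + 5*k) = 5 * (n + k)" using s n1 by simp
      then have "(fps_X::rat fps) ^ (5*n - ?a) * fps_X ^ (s + 3 + 5 * k) = ?p ^ (n + k)"
        by (simp flip: power_add power_mult)
      then show "?f (n + k) = fps_X ^ (5*n - ?a) * (1 - fps_X ^ (s + 3 + 5 * k))"
        by (simp add: algebra_simps)
    qed
    also have "\<dots> = fps_X ^ ((5*n - ?a) * n) * ?PA"
      unfolding prod.distrib qpoch_Xpow prod_constant card_lessThan power_mult ..
    finally show ?thesis .
  qed
  have H2b: "(\<Prod>j<n. ?f j) = (-1) ^ n * fps_X ^ (5 * tri n) * ?PB"
  proof -
    have "(\<Prod>j<n. ?f j) = (\<Prod>k<n. ?f (n - Suc k))" by (rule prod.nat_diff_reindex[symmetric])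
    also have "\<dots> = (\<Prod>k<n. (-1) * fps_X ^ (5 * (n - Suc k)) * (1 - fps_X ^ (2 - s + 5 * k)))"
    proof (intro prod.cong refl)
      fix k assume "k \<in> {..<n}"
      then have "5 * (n - Suc k) + (2 - s + 5 * k) = 5*n - ?a" using s by simp
      then have "(fps_X::rat fps) ^ (5 * (n - Suc k)) * fps_X ^ (2 - s + 5 * k) = ?z"
        by (simp flip: power_add)
      moreover have "?p ^ (n - Suc k) = fps_X ^ (5 * (n - Suc k))" by (simp flip: power_mult)
      ultimately show "?f (n - Suc k) = (-1) * fps_X ^ (5 * (n - Suc k)) * (1 - fps_X ^ (2 - s + 5 * k))"
        by (simp add: algebra_simps)
    qed
    also have "\<dots> = (-1) ^ n * (\<Prod>k<n. (fps_X::rat fps) ^ (5 * (n - Suc k))) * ?PB"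
      unfolding prod.distrib qpoch_Xpow by simp
    also have "(\<Prod>k<n. (fps_X::rat fps) ^ (5 * (n - Suc k))) = (\<Prod>k<n. fps_X ^ (5 * k))"
      by (rule prod.nat_diff_reindex)
    also have "\<dots> = fps_X ^ (5 * tri n)"
      unfolding power_sum[symmetric] tri_def sum_distrib_left ..
    finally show ?thesis .
  qed
  have H2: "(\<Prod>j<2*n. ?f j) = (-1) ^ n * fps_X ^ M * (?PA * ?PB)"
    using prod_split[of ?f n n] H2a H2b unfolding M_def mult_2
    by (simp add: power_add algebra_simps)
  have H3: "(\<Sum>j\<le>2*n. ?p ^ tri j * qbin ?p (2*n) j * (-1) ^ j * ?z ^ (2*n - j)) =
        (-1) ^ n * fps_X ^ M * (\<Sum>t\<in>{-int n..int n}. eps t * fps_X ^ es s t * qbz ?p (2*n) (int n + t))"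
  proof -
    have F1: "(\<Sum>t\<in>{-int n..int n}. eps t * fps_X ^ es s t * qbz ?p (2*n) (int n + t)) =
          (\<Sum>j\<le>2*n. eps (int j - int n) * fps_X ^ es s (int j - int n) * qbin ?p (2*n) j)"
    proof (rule sum.reindex_bij_witness[of _ "\<lambda>j. int j - int n" "\<lambda>t. nat (t + int n)"])
      show "\<And>j. j \<in> {..2*n} \<Longrightarrow> nat ((int j - int n) + int n) = j" by simp
      show "\<And>j. j \<in> {..2*n} \<Longrightarrow> int j - int n \<in> {-int n..int n}" by auto
      show "\<And>t. t \<in> {-int n..int n} \<Longrightarrow> int (nat (t + int n)) - int n = t" by simp
      show "\<And>t. t \<in> {-int n..int n} \<Longrightarrow> nat (t + int n) \<in> {..2*n}" by auto
      show "\<And>t. t \<in> {-int n..int n} \<Longrightarrow> eps (int (nat (t + int n)) - int n) * fps_X ^ es s (int (nat (t + int n)) - int n) * qbin ?p (2*n) (nat (t + int n))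
          = eps t * fps_X ^ es s t * qbz ?p (2*n) (int n + t)"
        by (auto simp: qbz_def add.commute)
    qed
    have TT: "\<And>j. j \<in> {..2*n} \<Longrightarrow> ?p ^ tri j * qbin ?p (2*n) j * (-1) ^ j * ?z ^ (2*n - j) =
        (-1) ^ n * fps_X ^ M * (eps (int j - int n) * fps_X ^ es s (int j - int n) * qbin ?p (2*n) j)"
    proof -
      fix j assume "j \<in> {..2*n}"
      then have "5 * tri j + (5*n - ?a) * (2*n - j) = M + es s (int j - int n)"
        using expo_id[OF s n1, of j] unfolding M_def by (simp add: mult.commute)
      then have "?p ^ tri j * ?z ^ (2*n - j) = fps_X ^ M * fps_X ^ es s (int j - int n)"
        by (simp flip: power_add power_mult add: mult.commute)
      then show "?p ^ tri j * qbin ?p (2*n) j * (-1) ^ j * ?z ^ (2*n - j) =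
        (-1) ^ n * fps_X ^ M * (eps (int j - int n) * fps_X ^ es s (int j - int n) * qbin ?p (2*n) j)"
        unfolding neg1_pow[of j n] by (simp add: algebra_simps)
    qed
    have F3: "(\<Sum>j\<le>2*n. ?p ^ tri j * qbin ?p (2*n) j * (-1) ^ j * ?z ^ (2*n - j)) =
       (\<Sum>j\<le>2*n. (-1) ^ n * fps_X ^ M * (eps (int j - int n) * fps_X ^ es s (int j - int n) * qbin ?p (2*n) j))"
      by (rule sum.cong[OF refl TT])
    also have "\<dots> = (-1) ^ n * fps_X ^ M * (\<Sum>j\<le>2*n. eps (int j - int n) * fps_X ^ es s (int j - int n) * qbin ?p (2*n) j)"
      by (rule sum_distrib_left[symmetric])
    also note F1[symmetric]
    finally show ?thesis .
  qed
  have nz: "(-1::rat fps) ^ n * fps_X ^ M \<noteq> 0" by simp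
  have E: "(-1) ^ n * fps_X ^ M * (?PA * ?PB) =
        (-1) ^ n * fps_X ^ M * (\<Sum>t\<in>{-int n..int n}. eps t * fps_X ^ es s t * qbz ?p (2*n) (int n + t))"
    unfolding H2[symmetric] H1 by (rule H3)
  show ?thesis using mult_left_cancel[OF nz] E by blast
qed


unbundle fps_syntax
declare qbin.simps(3)[simp del] bseq.simps(3)[simp del]

abbreviation Pinf :: "nat \<Rightarrow> rat fps" where "Pinf r \<equiv> qpoch_inf (fps_X ^ r) (fps_X ^ 5)"
abbreviation Qinf :: "rat fps" where "Qinf \<equiv> qpoch_inf (fps_X ^ 1) (fps_X ^ 1)"

lemma prod_tendsto_Pinf:
  assumes "a \<ge> 1" "b \<ge> 1"
  shows "(\<lambda>n. qpoch ((fps_X::rat fps) ^ a) (fps_X ^ 5) n * qpoch (fps_X ^ b) (fps_X ^ 5) n) \<longlonglongrightarrow> Pinf a * Pinf b"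
  unfolding tendsto_fps_iff
proof
  fix c
  show "eventually (\<lambda>n. (qpoch ((fps_X::rat fps) ^ a) (fps_X ^ 5) n * qpoch (fps_X ^ b) (fps_X ^ 5) n) $ c = (Pinf a * Pinf b) $ c) sequentially"
    using eventually_ge_at_top[of c]
  proof eventually_elim
    case (elim n)
    have "eqto c (Pinf a * Pinf b) (qpoch ((fps_X::rat fps) ^ a) (fps_X ^ 5) n * qpoch (fps_X ^ b) (fps_X ^ 5) n)"
      using assms elim by (intro eqto_mult qpoch_inf_eqto) auto
    then show ?case unfolding eqto_def by auto
  qed
qed

lemma jtp_tendsto:
  assumes s: "s \<le> 1"
  shows "(\<lambda>n. qpoch ((fps_X::rat fps) ^ (s+3)) (fps_X ^ 5) n * qpoch (fps_X ^ (2-s)) (fps_X ^ 5) n)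
           \<longlonglongrightarrow> inverse (Pinf 5) * Theta s"
  unfolding jtp_finite[OF s]
proof (rule GL[OF s, where w = "\<lambda>n. n"])
  fix c t
  show "eventually (\<lambda>n. eqto c (qbz (fps_X ^ 5) (2*n) (int n + t)) (inverse (Pinf 5))) sequentially"
    using eventually_ge_at_top[of "c + nat \<bar>t\<bar>"]
  proof eventually_elim
    case (elim n)
    then have k0: "int n + t \<ge> 0" by linarith
    have "eqto c (qbin ((fps_X::rat fps) ^ 5) (2*n) (nat (int n + t))) (inverse (qpoch_inf (fps_X ^ 5) (fps_X ^ 5)))"
      by (rule qbin_eqto_inf) (use elim in linarith)+
    then show ?case unfolding qbz_def using k0 by simp
  qed
qed simp

lemma Theta_eq:
  assumes s: "s \<le> 1"
  shows "Theta s = Pinf 5 * (Pinf (s+3) * Pinf (2-s))"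
proof -
  have "Pinf (s+3) * Pinf (2-s) = inverse (Pinf 5) * Theta s"
    using LIMSEQ_unique[OF prod_tendsto_Pinf jtp_tendsto[OF s]] s by simp
  moreover have "Pinf 5 * inverse (Pinf 5) = 1" by (rule inverse_mult_eq_1') simp
  ultimately show ?thesis by (simp add: mult.assoc[symmetric])
qed

lemma D_tendsto:
  assumes s: "s \<le> 1"
  shows "(\<lambda>N. D s (Suc N)) \<longlonglongrightarrow> inverse Qinf * Theta s"
  unfolding D_def trm_def
proof (rule GL[OF s, where w = "\<lambda>N. Suc N"])
  fix c t
  show "eventually (\<lambda>N. eqto c (qbz fps_X (Suc N) (kk s (Suc N) t)) (inverse Qinf)) sequentially"
    using eventually_ge_at_top[of "2*c + 5 * nat \<bar>t\<bar> + 4"]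
  proof eventually_elim
    case (elim N)
    have k1: "kk s (Suc N) t \<ge> int c" "int (Suc N) - kk s (Suc N) t \<ge> int c"
      unfolding kk_def using elim s by auto
    have "eqto c (qbin ((fps_X::rat fps) ^ 1) (Suc N) (nat (kk s (Suc N) t))) (inverse Qinf)"
      by (rule qbin_eqto_inf) (use k1 in linarith)+
    then show ?case unfolding qbz_def using k1 by simp
  qed
qed simp

lemma bseq_low: assumes "j + 1 < n" shows "bseq i n $ j = 0"
proof -
  define m where "m = n - 2"
  have n: "n = Suc (Suc m)" using assms unfolding m_def by simp
  have "j < Suc m" using assms n by simp
  then show ?thesis unfolding n bseq.simps(3) by (simp only: fps_sub_nth fps_X_power_mult_nth) simp
qed

lemma BL:
  assumes "c < N"
  shows "Lsum i N $ c = (\<Sum>n\<le>N. bseq i n * inverse (qpoch fps_X fps_X n)) $ c"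
proof -
  have "(Lsum i N - (\<Sum>n\<le>N. bseq i n * inverse (qpoch fps_X fps_X n))) $ c = 0"
  proof -
    have "Lsum i N - (\<Sum>n\<le>N. bseq i n * inverse (qpoch fps_X fps_X n)) =
          (\<Sum>n\<le>N. bseq i n * (qbin fps_X N n - inverse (qpoch fps_X fps_X n)))"
      unfolding Lsum_def by (simp add: sum_subtractf algebra_simps)
    moreover have "(bseq i n * (qbin fps_X N n - inverse (qpoch fps_X fps_X n))) $ c = 0" if n: "n \<le> N" for n
    proof -
      have ev: "eqto (N - n) (qbin ((fps_X::rat fps) ^ 1) N n) (inverse (qpoch (fps_X ^ 1) (fps_X ^ 1) n))"
        by (rule qbin_eqto_inv) (use n in auto)
      show ?thesis unfolding fps_mult_nth
      proof (intro sum.neutral ballI)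
        fix j assume j: "j \<in> {0..c}"
        show "bseq i n $ j * (qbin fps_X N n - inverse (qpoch fps_X fps_X n)) $ (c - j) = 0"
        proof (cases "j + 1 < n")
          case True then show ?thesis by (simp add: bseq_low)
        next
          case False
          then have "c - j \<le> N - n" using j assms n by auto
          then show ?thesis using ev unfolding eqto_def by simp
        qed
      qed
    qed
    ultimately show ?thesis by (simp add: fps_sum_nth)
  qed
  then show ?thesis by simp
qed

lemma S_tendsto:
  assumes i: "i \<in> {1, 2}"
  shows "(\<lambda>N. \<Sum>n<N. bseq i n / qpoch fps_X fps_X n) \<longlonglongrightarrow> inverse Qinf * Theta (i - 1)"
proof -
  have s: "i - 1 \<le> 1" using i by auto
  have dv: "bseq i n / qpoch fps_X fps_X n = bseq i n * inverse (qpoch fps_X fps_X n)" for n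
    by (rule fps_divide_unit) (use qpoch_Xpow_0[of 1 1 n] in simp)
  have T: "(\<lambda>N. Lsum i N) \<longlonglongrightarrow> inverse Qinf * Theta (i - 1)"
    using D_tendsto[OF s] L_eq_D[OF i] by simp
  have "(\<lambda>N. \<Sum>n<Suc N. bseq i n / qpoch fps_X fps_X n) \<longlonglongrightarrow> inverse Qinf * Theta (i - 1)"
    unfolding tendsto_fps_iff
  proof
    fix c
    have "eventually (\<lambda>N. Lsum i N $ c = (inverse Qinf * Theta (i - 1)) $ c) sequentially"
      using T unfolding tendsto_fps_iff by blast
    then show "eventually (\<lambda>N. (\<Sum>n<Suc N. bseq i n / qpoch fps_X fps_X n) $ c = (inverse Qinf * Theta (i - 1)) $ c) sequentially"
      using eventually_gt_at_top[of c]
    proof eventually_elim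
      case (elim N)
      then show ?case using BL[OF elim(2), of i] unfolding dv lessThan_Suc_atMost by simp
    qed
  qed
  then show ?thesis by (rule LIMSEQ_imp_Suc)
qed

lemma qpoch_add_Xpow: "qpoch ((fps_X::rat fps) ^ r) (fps_X ^ d) (m + k) =
   qpoch (fps_X ^ r) (fps_X ^ d) m * (\<Prod>j<k. 1 - fps_X ^ (r + d * (m + j)))"
  unfolding qpoch_Xpow prod_split ..

lemma qpoch_Suc_Xpow: "qpoch ((fps_X::rat fps) ^ r) (fps_X ^ d) (Suc m) =
   qpoch (fps_X ^ r) (fps_X ^ d) m * (1 - fps_X ^ (r + d * m))"
  unfolding qpoch_Xpow by simp

lemma prod5: "(\<Prod>j<5. g j) = g 0 * g 1 * g 2 * g 3 * g 4" for g :: "nat \<Rightarrow> 'a::comm_monoid_mult"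
  by (simp add: lessThan_nat_numeral ac_simps)

lemma qpoch_5: "qpoch ((fps_X::rat fps) ^ 1) (fps_X ^ 1) (5 * n) =
   qpoch (fps_X ^ 1) (fps_X ^ 5) n * qpoch (fps_X ^ 2) (fps_X ^ 5) n * qpoch (fps_X ^ 3) (fps_X ^ 5) n *
   qpoch (fps_X ^ 4) (fps_X ^ 5) n * qpoch (fps_X ^ 5) (fps_X ^ 5) n"
proof (induction n)
  case 0 then show ?case by (simp add: qpoch_def)
next
  case (Suc n)
  have e: "5 * Suc n = 5 * n + 5" by simp
  have e0: "1 + 1 * (5 * n + 0) = 1 + 5 * n" and e1: "1 + 1 * (5 * n + 1) = 2 + 5 * n"
   and e2: "1 + 1 * (5 * n + 2) = 3 + 5 * n" and e3: "1 + 1 * (5 * n + 3) = 4 + 5 * n"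
   and e4: "1 + 1 * (5 * n + 4) = 5 + 5 * n" by simp_all
  show ?case unfolding e qpoch_add_Xpow prod5 e0 e1 e2 e3 e4 qpoch_Suc_Xpow Suc
    by (simp only: ac_simps)
qed

lemma Qinf_eq: "Qinf = Pinf 1 * Pinf 2 * Pinf 3 * Pinf 4 * Pinf 5"
proof (rule eqto_all)
  fix c
  have "eqto c Qinf (qpoch ((fps_X::rat fps) ^ 1) (fps_X ^ 1) (5 * c))"
    by (rule qpoch_inf_eqto) auto
  also have "qpoch ((fps_X::rat fps) ^ 1) (fps_X ^ 1) (5 * c) =
   qpoch (fps_X ^ 1) (fps_X ^ 5) c * qpoch (fps_X ^ 2) (fps_X ^ 5) c * qpoch (fps_X ^ 3) (fps_X ^ 5) c *
   qpoch (fps_X ^ 4) (fps_X ^ 5) c * qpoch (fps_X ^ 5) (fps_X ^ 5) c" by (rule qpoch_5)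
  finally have A: "eqto c Qinf (qpoch (fps_X ^ 1) (fps_X ^ 5) c * qpoch (fps_X ^ 2) (fps_X ^ 5) c * qpoch (fps_X ^ 3) (fps_X ^ 5) c *
   qpoch (fps_X ^ 4) (fps_X ^ 5) c * qpoch (fps_X ^ 5) (fps_X ^ 5) c)" .
  have B: "eqto c (Pinf 1 * Pinf 2 * Pinf 3 * Pinf 4 * Pinf 5) (qpoch (fps_X ^ 1) (fps_X ^ 5) c * qpoch (fps_X ^ 2) (fps_X ^ 5) c * qpoch (fps_X ^ 3) (fps_X ^ 5) c *
   qpoch (fps_X ^ 4) (fps_X ^ 5) c * qpoch (fps_X ^ 5) (fps_X ^ 5) c)"
    by (intro eqto_mult qpoch_inf_eqto) auto
  show "eqto c Qinf (Pinf 1 * Pinf 2 * Pinf 3 * Pinf 4 * Pinf 5)"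
    using A B eqto_sym eqto_trans by blast
qed


unbundle fps_syntax

lemma inv5:
  fixes A B C D E :: "rat fps"
  assumes "B $ 0 \<noteq> 0" "C $ 0 \<noteq> 0" "E $ 0 \<noteq> 0"
  shows "inverse (A * B * C * D * E) * (E * (C * B)) = inverse (A * D)"
proof -
  have "inverse (A * B * C * D * E) * (E * (C * B)) =
        inverse A * inverse D * (inverse B * B) * (inverse C * C) * (inverse E * E)"
    by (simp add: fps_inverse_mult ac_simps)
  also have "\<dots> = inverse A * inverse D"
    using assms by (simp add: inverse_mult_eq_1)
  finally show ?thesis by (simp add: fps_inverse_mult)
qed

theorem theorem1p1:
  fixes i :: nat
  assumes "i \<in> {1, 2}"
  shows "(\<lambda>n. bseq i n / qpoch fps_X fps_X n) sums
           inverse (qpoch_inf (fps_X ^ i) (fps_X ^ 5) * qpoch_inf (fps_X ^ (5 - i)) (fps_X ^ 5))"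
proof -
  have s: "i - 1 \<le> 1" using assms by auto
  have L: "(\<lambda>N. \<Sum>n<N. bseq i n / qpoch fps_X fps_X n) \<longlonglongrightarrow> inverse Qinf * Theta (i - 1)"
    by (rule S_tendsto[OF assms])
  have P0: "\<And>r. r \<ge> 1 \<Longrightarrow> Pinf r $ 0 \<noteq> 0" by simp
  have "inverse Qinf * Theta (i - 1) =
        inverse (qpoch_inf (fps_X ^ i) (fps_X ^ 5) * qpoch_inf (fps_X ^ (5 - i)) (fps_X ^ 5))"
  proof (cases "i = 1")
    case True
    have "inverse Qinf * Theta (i - 1) = inverse (Pinf 1 * Pinf 2 * Pinf 3 * Pinf 4 * Pinf 5) * (Pinf 5 * (Pinf 3 * Pinf 2))"
      unfolding Qinf_eq Theta_eq[OF s] using True by simp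
    also have "\<dots> = inverse (Pinf 1 * Pinf 4)" by (rule inv5) (simp_all add: P0)
    finally show ?thesis using True by simp
  next
    case False
    then have i2: "i = 2" using assms by auto
    have "inverse Qinf * Theta (i - 1) = inverse (Pinf 2 * Pinf 1 * Pinf 4 * Pinf 3 * Pinf 5) * (Pinf 5 * (Pinf 4 * Pinf 1))"
      unfolding Qinf_eq Theta_eq[OF s] using i2 by (simp add: ac_simps)
    also have "\<dots> = inverse (Pinf 2 * Pinf 3)"
      by (rule inv5) (use qpoch_inf_0[of 1 5] qpoch_inf_0[of 4 5] qpoch_inf_0[of 5 5] in simp_all)
    finally show ?thesis using i2 by simp
  qed
  then show ?thesis using L unfolding sums_def by simp
qed


end
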